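(* Let $M$ be a set of $m\ge1$ sources and $N$ a set of $n$ sinks, let $\mathbf{d}:M\to\mathbb{Z}_{\ge0}$ satisfy $n = 1+\sum_{\mu}\mathbf{d}(\mu)$, and let $P_{\mathbf{d}}$ be the transportation polytope with supply $\mathbf{m}(\mu)=1+m\,\mathbf{d}(\mu)$ for $\mu\in M$ and demand $\mathbf{n}(\nu)=m$ for $\nu\in N$. Then the map $x\mapsto \operatorname{supp}(x)$ is a bijection from the vertex set of $P_{\mathbf{d}}$ to $\mathcal{T}_{\mathbf{d}}$, and two vertices of $P_{\mathbf{d}}$ are adjacent in the $1$-skeleton of $P_{\mathbf{d}}$ if and only if their supports are adjacent in the pivoting graph $\mathcal{G}_{\mathbf{d}}$ (so the $1$-skeleton of $P_{\mathbf{d}}$ is isomorphic to $\mathcal{G}_{\mathbf{d}}$ via this map).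
   Context: For supply $\mathbf{m}:M\to\mathbb{R}_{\ge0}$ and demand $\mathbf{n}:N\to\mathbb{R}_{\ge0}$ with equal totals, the transportation polytope is $P_{\mathbf{m},\mathbf{n}}=\{x\in\mathbb{R}_{\ge0}^{M\times N} : \sum_\nu x_{\mu,\nu}=\mathbf{m}(\mu)\ \forall\mu,\ \sum_\mu x_{\mu,\nu}=\mathbf{n}(\nu)\ \forall\nu\}$. The support $\operatorname{supp}(x)$ is the subgraph of $K_{M,N}$ consisting of edges $(\mu,\nu)$ with $x_{\mu,\nu}>0$. $\mathcal{T}_{\mathbf{d}}$ is the set of spanning trees of $K_{M,N}$ in which each source $\mu$ has degree exactly $1+\mathbf{d}(\mu)$. Pivoting: for $T\in\mathcal{T}_{\mathbf{d}}$ and an edge $\varepsilon\notin T$, let $\varepsilon'$ be the other edge, incident to the source endpoint of $\varepsilon$, of the unique cycle in $T\cup\{\varepsilon\}$; then $(T\setminus\{\varepsilon'\})\cup\{\varepsilon\}$ is obtained by pivoting. $\mathcal{G}_{\mathbf{d}}$ is the graph on $\mathcal{T}_{\mathbf{d}}$ whose edges are pairs of trees related by a pivot. *)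

theory Defs
  imports "HOL-Analysis.Analysis"
begin

text \<open>Sources are the elements of a finite type 'm (M = UNIV), sinks the elements of a
finite type 'n (N = UNIV). A subgraph is given by its edge set E :: ('m \<times> 'n) set.\<close>

definition edge_ends :: "'m \<times> 'n \<Rightarrow> ('m + 'n) set" where
  "edge_ends e = {Inl (fst e), Inr (snd e)}"

definition adjrel :: "('m \<times> 'n) set \<Rightarrow> (('m + 'n) \<times> ('m + 'n)) set" where
  "adjrel E = {(u, v). \<exists>e\<in>E. edge_ends e = {u, v}}"

definition is_cycle :: "('m \<times> 'n) set \<Rightarrow> ('m + 'n) list \<Rightarrow> bool" where
  "is_cycle E vs \<longleftrightarrow> length vs \<ge> 3 \<and> distinct vs \<and>
     (\<forall>i < length vs. (vs ! i, vs ! ((i + 1) mod length vs)) \<in> adjrel E)"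

definition cycle_edges :: "('m \<times> 'n) set \<Rightarrow> ('m + 'n) list \<Rightarrow> ('m \<times> 'n) set" where
  "cycle_edges E vs = {e \<in> E. \<exists>i < length vs. edge_ends e = {vs ! i, vs ! ((i + 1) mod length vs)}}"

definition connected_graph :: "('m \<times> 'n) set \<Rightarrow> bool" where
  "connected_graph E \<longleftrightarrow> (\<forall>u v. (u, v) \<in> (adjrel E)\<^sup>*)"

definition acyclic_graph :: "('m \<times> 'n) set \<Rightarrow> bool" where
  "acyclic_graph E \<longleftrightarrow> (\<nexists>vs. is_cycle E vs)"

text \<open>Spanning tree of K_{M,N} (all vertices of 'm + 'n are vertices of the subgraph).\<close>
definition spanning_tree :: "('m::finite \<times> 'n::finite) set \<Rightarrow> bool" where
  "spanning_tree T \<longleftrightarrow> connected_graph T \<and> acyclic_graph T"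

definition source_degree :: "('m \<times> 'n::finite) set \<Rightarrow> 'm \<Rightarrow> nat" where
  "source_degree T \<mu> = card {\<nu>. (\<mu>, \<nu>) \<in> T}"

definition trees_d :: "('m::finite \<Rightarrow> nat) \<Rightarrow> ('m \<times> 'n::finite) set set" where
  "trees_d d = {T. spanning_tree T \<and> (\<forall>\<mu>. source_degree T \<mu> = 1 + d \<mu>)}"

definition pivot :: "('m \<times> 'n) set \<Rightarrow> ('m \<times> 'n) set \<Rightarrow> bool" where
  "pivot T T' \<longleftrightarrow> (\<exists>\<epsilon> \<epsilon>' vs. \<epsilon> \<notin> T \<and> is_cycle (insert \<epsilon> T) vs \<and>
      \<epsilon> \<in> cycle_edges (insert \<epsilon> T) vs \<and> \<epsilon>' \<in> cycle_edges (insert \<epsilon> T) vs \<and>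
      \<epsilon>' \<noteq> \<epsilon> \<and> fst \<epsilon>' = fst \<epsilon> \<and> T' = insert \<epsilon> (T - {\<epsilon>'}))"

definition pivot_adj :: "('m::finite \<Rightarrow> nat) \<Rightarrow> ('m \<times> 'n::finite) set \<Rightarrow> ('m \<times> 'n) set \<Rightarrow> bool" where
  "pivot_adj d T T' \<longleftrightarrow> T \<in> trees_d d \<and> T' \<in> trees_d d \<and> (pivot T T' \<or> pivot T' T)"

definition transport_polytope ::
  "('m::finite \<Rightarrow> real) \<Rightarrow> ('n::finite \<Rightarrow> real) \<Rightarrow> (real ^ ('m \<times> 'n)) set" where
  "transport_polytope supply demand = {x. (\<forall>\<mu> \<nu>. x $ (\<mu>, \<nu>) \<ge> 0) \<and>
      (\<forall>\<mu>. (\<Sum>\<nu>\<in>UNIV. x $ (\<mu>, \<nu>)) = supply \<mu>) \<and> (\<forall>\<nu>. (\<Sum>\<mu>\<in>UNIV. x $ (\<mu>, \<nu>)) = demand \<nu>)}"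

definition P_d :: "('m::finite \<Rightarrow> nat) \<Rightarrow> (real ^ ('m \<times> 'n::finite)) set" where
  "P_d d = transport_polytope (\<lambda>\<mu>. 1 + real CARD('m) * real (d \<mu>)) (\<lambda>\<nu>. real CARD('m))"

definition supp :: "real ^ ('m::finite \<times> 'n::finite) \<Rightarrow> ('m \<times> 'n) set" where
  "supp x = {e. x $ e > 0}"

definition vertices :: "'a::real_vector set \<Rightarrow> 'a set" where
  "vertices P = {x. x extreme_point_of P}"

definition skeleton_adj :: "'a::euclidean_space set \<Rightarrow> 'a \<Rightarrow> 'a \<Rightarrow> bool" where
  "skeleton_adj P x y \<longleftrightarrow> x \<in> vertices P \<and> y \<in> vertices P \<and> x \<noteq> y \<and>
     (\<exists>F. F face_of P \<and> aff_dim F = 1 \<and> x \<in> F \<and> y \<in> F)"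

end

theory Submission
  imports Defs
begin



lemma edge_ends_eq_iff: "edge_ends e = edge_ends e' \<longleftrightarrow> e = e'"
  by (cases e; cases e') (auto simp: edge_ends_def doubleton_eq_iff)

lemma adjrel_iff: "(u,v) \<in> adjrel E \<longleftrightarrow>
   (\<exists>a b. (a,b) \<in> E \<and> ((u = Inl a \<and> v = Inr b) \<or> (u = Inr b \<and> v = Inl a)))"
  by (auto simp: adjrel_def edge_ends_def doubleton_eq_iff) (metis fst_conv snd_conv)+

lemma adjrel_sym: "(u,v) \<in> adjrel E \<Longrightarrow> (v,u) \<in> adjrel E"
  by (auto simp: adjrel_iff)

lemma adjrel_mono: "E \<subseteq> E' \<Longrightarrow> adjrel E \<subseteq> adjrel E'"
  by (auto simp: adjrel_def)

lemma is_cycle_mono: "is_cycle E vs \<Longrightarrow> E \<subseteq> E' \<Longrightarrow> is_cycle E' vs"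
  unfolding is_cycle_def using adjrel_mono by blast

lemma cycle_edges_sub: "cycle_edges E vs \<subseteq> E"
  by (auto simp: cycle_edges_def)

lemma is_cycle_edges: "is_cycle E vs \<Longrightarrow> is_cycle (cycle_edges E vs) vs"
  unfolding is_cycle_def adjrel_def cycle_edges_def by fastforce

lemma is_cycle_intro:
  assumes "length vs \<ge> 3" "distinct vs" "successively (\<lambda>a b. (a,b) \<in> adjrel E) vs"
    "(last vs, hd vs) \<in> adjrel E"
  shows "is_cycle E vs"
  unfolding is_cycle_def
proof (intro conjI allI impI)
  fix i assume i: "i < length vs"
  show "(vs ! i, vs ! ((i + 1) mod length vs)) \<in> adjrel E"
  proof (cases "Suc i < length vs")
    case True
    then show ?thesis using successively_nth[OF assms(3) True] by simp
  next
    case False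
    then have "i = length vs - 1" using i by simp
    moreover have "vs \<noteq> []" using assms(1) by auto
    ultimately show ?thesis using assms(4) i
      by (simp add: last_conv_nth hd_conv_nth)
  qed
qed (use assms in auto)

definition deg :: "('m \<times> 'n) set \<Rightarrow> ('m + 'n) \<Rightarrow> nat" where
  "deg E v = card {e\<in>E. v \<in> edge_ends e}"

lemma two_last: "length xs \<ge> 2 \<Longrightarrow> \<exists>ys a b. xs = ys @ [a, b]"
  by (cases xs rule: rev_exhaust; cases "butlast xs" rule: rev_exhaust) auto

lemma core_cycle:
  fixes E :: "('m::finite \<times> 'n::finite) set"
  assumes ne: "E \<noteq> {}" and dg: "\<And>v. deg E v \<noteq> 1"
  shows "\<exists>vs. is_cycle E vs"
proof (rule ccontr)
  assume nc: "\<nexists>vs. is_cycle E vs"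
  define path where "path ps \<longleftrightarrow> distinct ps \<and> length ps \<ge> 2 \<and>
      successively (\<lambda>a b. (a,b) \<in> adjrel E) ps" for ps :: "('m+'n) list"
  have ext: "\<exists>ps'. path ps' \<and> length ps' > length ps" if p: "path ps" for ps
  proof -
    obtain xs w' w where ps: "ps = xs @ [w', w]" using two_last p unfolding path_def by blast
    have "(w', w) \<in> adjrel E" using p unfolding path_def ps
      by (simp add: successively_append_iff)
    then obtain e1 where e1: "e1 \<in> E" "edge_ends e1 = {w', w}" by (auto simp: adjrel_def)
    let ?D = "{e\<in>E. w \<in> edge_ends e}"
    have fD: "finite ?D" by simp
    have "e1 \<in> ?D" using e1 by auto
    then have "card ?D \<ge> 1" using fD by (metis One_nat_def Suc_leI card_gt_0_iff empty_iff)
    with dg[of w] have "card ?D \<ge> 2" unfolding deg_def by linarith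
    then have "\<not> ?D \<subseteq> {e1}"
      by (metis card.empty card.insert card_mono empty_iff finite.emptyI finite.insertI not_less_eq_eq numeral_2_eq_2)
    then obtain e2 where e2: "e2 \<in> E" "w \<in> edge_ends e2" "e2 \<noteq> e1" by auto
    obtain a b where ab: "e2 = (a,b)" by (cases e2)
    define u where "u = (if w = Inl a then Inr b else Inl a)"
    have wu: "edge_ends e2 = {w, u}" "u \<noteq> w"
      using e2(2) unfolding u_def ab edge_ends_def by auto
    have adj: "(w, u) \<in> adjrel E" using wu e2 by (auto simp: adjrel_def)
    have uw': "u \<noteq> w'"
    proof
      assume "u = w'"
      then have "edge_ends e2 = edge_ends e1" using wu e1 by auto
      then show False using e2 edge_ends_eq_iff by blast
    qed
    show ?thesis
    proof (cases "u \<in> set ps")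
      case False
      have "path (ps @ [u])" using p False adj unfolding path_def
        by (auto simp: successively_append_iff ps)
      then show ?thesis by auto
    next
      case True
      then obtain ys zs where yz: "ps = ys @ u # zs" by (meson split_list)
      have "zs \<noteq> []" using yz ps wu by auto
      moreover have "zs \<noteq> [w]"
      proof
        assume "zs = [w]"
        then have "rev (ys @ [u, w]) = rev (xs @ [w', w])" using yz ps by simp
        then show False using uw' by simp
      qed
      moreover have lastw: "last (u # zs) = w" using yz ps \<open>zs \<noteq> []\<close>
        by (metis last_ConsR last_append last_snoc list.distinct(1) append_Cons append_Nil)
      ultimately have len: "length (u # zs) \<ge> 3"
        by (cases zs; cases "tl zs") auto
      have dist: "distinct (u # zs)" using p yz unfolding path_def by simp
      have succ: "successively (\<lambda>a b. (a,b) \<in> adjrel E) (u # zs)"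
        using p yz unfolding path_def by (simp add: successively_append_iff)
      have "last (u # zs) = w" using yz ps \<open>zs \<noteq> []\<close>
        by (metis last_ConsR last_append last_snoc list.distinct(1) append_Cons append_Nil)
      then have "(last (u # zs), hd (u # zs)) \<in> adjrel E" using adj by simp
      then have "is_cycle E (u # zs)" using is_cycle_intro len dist succ by blast
      then show ?thesis using nc by blast
    qed
  qed
  obtain a b where ab: "(a,b) \<in> E" using ne by auto
  have p0: "path [Inl a, Inr b]" unfolding path_def using ab by (auto simp: adjrel_iff)
  have "\<exists>ps. path ps \<and> length ps \<ge> k" for k
  proof (induction k)
    case 0 then show ?case using p0 by blast
  next
    case (Suc k)
    then obtain ps where "path ps" "length ps \<ge> k" by blast
    then show ?case using ext by (meson Suc_leI le_less_trans less_le_not_le not_less_eq_eq)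
  qed
  then obtain ps where ps: "path ps" "length ps \<ge> Suc (CARD('m + 'n))" by blast
  have "length ps = card (set ps)" using ps(1) unfolding path_def by (simp add: distinct_card)
  also have "\<dots> \<le> CARD('m + 'n)" by (rule card_mono) auto
  finally show False using ps(2) by simp
qed

lemma rtrancl_walk: "(a,b) \<in> R\<^sup>* \<Longrightarrow>
   \<exists>ws. ws \<noteq> [] \<and> hd ws = a \<and> last ws = b \<and> successively (\<lambda>x y. (x,y)\<in>R) ws"
proof (induction rule: rtrancl_induct)
  case base then show ?case by (rule exI[of _ "[a]"]) simp
next
  case (step y z)
  then obtain ws where ws: "ws \<noteq> []" "hd ws = a" "last ws = y" "successively (\<lambda>x y. (x,y)\<in>R) ws"
    by blast
  then show ?case using step(2)
    by (intro exI[of _ "ws @ [z]"]) (auto simp: successively_append_iff)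
qed

lemma walk_distinct:
  "ws \<noteq> [] \<Longrightarrow> successively P ws \<Longrightarrow>
   \<exists>ws'. distinct ws' \<and> ws' \<noteq> [] \<and> hd ws' = hd ws \<and> last ws' = last ws \<and> successively P ws'"
proof (induction ws rule: length_induct)
  case (1 ws)
  show ?case
  proof (cases "distinct ws")
    case True then show ?thesis using 1 by blast
  next
    case False
    then obtain xs ys zs y where d: "ws = xs@[y]@ys@[y]@zs" using not_distinct_decomp by blast
    let ?w = "xs @ [y] @ zs"
    have "length ?w < length ws" using d by simp
    moreover have "?w \<noteq> []" by simp
    moreover have "successively P ?w"
    proof -
      have s1: "successively P (xs @ [y])" using "1.prems"(2) unfolding d
        by (simp add: successively_append_iff)
      have "successively P ((xs @ [y] @ ys) @ (y # zs))" using "1.prems"(2) unfolding d by simp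
      then have s2: "successively P (y # zs)" by (simp only: successively_append_iff)
      have "successively P ((xs @ [y]) @ zs)"
        using s1 s2 by (cases zs) (auto simp: successively_append_iff)
      then show ?thesis by simp
    qed
    ultimately obtain w' where w': "distinct w'" "w' \<noteq> []" "hd w' = hd ?w" "last w' = last ?w"
      "successively P w'" using "1.IH" by blast
    have "hd ?w = hd ws" using d by (cases xs) auto
    moreover have "last ?w = last ws" using d by (cases zs rule: rev_exhaust) auto
    ultimately show ?thesis using w' by metis
  qed
qed




definition nz :: "real^'a::finite \<Rightarrow> 'a set" where "nz c = {e. c$e \<noteq> 0}"

definition Lmap :: "real^('m::finite \<times> 'n::finite) \<Rightarrow> real^('m + 'n)" where
  "Lmap z = (\<chi> v. case v of Inl \<mu> \<Rightarrow> (\<Sum>\<nu>\<in>UNIV. z$(\<mu>,\<nu>)) | Inr \<nu> \<Rightarrow> (\<Sum>\<mu>\<in>UNIV. z$(\<mu>,\<nu>)))"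

definition circ_free :: "('m::finite \<times> 'n::finite) set \<Rightarrow> bool" where
  "circ_free S \<longleftrightarrow> (\<forall>c. Lmap c = 0 \<and> nz c \<subseteq> S \<longrightarrow> c = 0)"

definition sg :: "'m + 'n \<Rightarrow> real" where "sg v = (case v of Inl _ \<Rightarrow> 1 | Inr _ \<Rightarrow> -1)"

definition Hsp :: "(real^('m::finite + 'n::finite)) set" where
  "Hsp = {w. (\<Sum>v\<in>UNIV. sg v * w$v) = 0}"

lemma Lmap_Inl: "Lmap z $ Inl \<mu> = (\<Sum>\<nu>\<in>UNIV. z$(\<mu>,\<nu>))" by (simp add: Lmap_def)
lemma Lmap_Inr: "Lmap z $ Inr \<nu> = (\<Sum>\<mu>\<in>UNIV. z$(\<mu>,\<nu>))" by (simp add: Lmap_def)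

lemma linear_Lmap: "linear Lmap"
  by (rule linearI) (auto simp: vec_eq_iff Lmap_def sum.distrib sum_distrib_left split: sum.split)

lemma Lmap_diff: "Lmap (a - b) = Lmap a - Lmap b"
  by (simp add: vec_eq_iff Lmap_def sum_subtractf split: sum.split)

lemma sum_UNIV_Plus: "(\<Sum>v\<in>(UNIV::('a::finite + 'b::finite) set). f v) =
   (\<Sum>a\<in>UNIV. f (Inl a)) + (\<Sum>b\<in>UNIV. f (Inr b))"
  by (subst UNIV_Plus_UNIV[symmetric], subst sum.Plus) (auto simp: comp_def)

lemma Lmap_in_Hsp: "Lmap z \<in> Hsp"
proof -
  have "(\<Sum>v\<in>UNIV. sg v * Lmap z $ v) =
     (\<Sum>a\<in>UNIV. \<Sum>b\<in>UNIV. z$(a,b)) - (\<Sum>b\<in>UNIV. \<Sum>a\<in>UNIV. z$(a,b))"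
    by (simp add: sum_UNIV_Plus sg_def Lmap_Inl Lmap_Inr sum_negf)
  also have "\<dots> = 0" by (subst sum.swap) simp
  finally show ?thesis unfolding Hsp_def by simp
qed

lemma subspace_nz: "subspace {z::real^'a::finite. nz z \<subseteq> S}"
  unfolding subspace_def nz_def by auto (metis (mono_tags) add_0 mem_Collect_eq subsetD)

lemma dim_nz: "dim {z::real^'a::finite. nz z \<subseteq> S} = card S"
proof -
  let ?d = "(\<lambda>i. axis i (1::real)) ` S"
  have B: "(Basis :: (real^'a) set) = range (\<lambda>i. axis i 1)"
    by (auto simp: Basis_vec_def)
  have d: "?d \<subseteq> Basis" by (auto simp: B)
  have eq: "{x::real^'a. \<forall>i\<in>Basis. i \<notin> ?d \<longrightarrow> x\<bullet>i = 0} = {z. nz z \<subseteq> S}"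
    by (auto simp: B nz_def inner_axis axis_eq_axis)
  have "card ?d = card S"
    by (rule card_image) (auto simp: inj_on_def axis_eq_axis)
  then show ?thesis using dim_substandard[OF d] eq by simp
qed

lemma nz_axis: "nz (axis k (1::real)) = {k}" by (auto simp: nz_def axis_def)

lemma axis_notin_Hsp: "axis k 1 \<notin> Hsp"
proof -
  have "(\<Sum>v\<in>UNIV. sg v * axis k 1 $ v) = sg k"
    by (subst sum.remove[of _ k]) (auto simp: axis_def)
  moreover have "sg k \<noteq> 0" by (cases k) (auto simp: sg_def)
  ultimately show ?thesis by (simp add: Hsp_def)
qed

lemma subspace_Hsp: "subspace Hsp"
  unfolding subspace_def Hsp_def
  by (auto simp: algebra_simps sum.distrib sum_distrib_left[symmetric])

lemma span_Hsp: "span Hsp = Hsp"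
  using subspace_Hsp by (simp add: span_eq_iff)

lemma inj_Lmap:
  assumes "circ_free S"
  shows "inj_on Lmap (span {z. nz z \<subseteq> S})"
proof -
  have sp: "span {z. nz z \<subseteq> S} = {z. nz z \<subseteq> S}" using subspace_nz by (simp add: span_eq_iff)
  show ?thesis unfolding sp inj_on_def
  proof (intro ballI impI)
    fix a b assume a: "a \<in> {z. nz z \<subseteq> S}" and b: "b \<in> {z. nz z \<subseteq> S}" and e: "Lmap a = Lmap b"
    have "nz (a - b) \<subseteq> nz a \<union> nz b" by (auto simp: nz_def)
    then have "nz (a - b) \<subseteq> S" using a b by auto
    moreover have "Lmap (a - b) = 0" using e by (simp add: Lmap_diff)
    ultimately have "a - b = 0" using assms circ_free_def by blast
    then show "a = b" by simp
  qed
qed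

lemma lemmaW:
  fixes S :: "('m::finite \<times> 'n::finite) set"
  assumes K: "K \<noteq> {}" and SK: "\<And>e. e \<in> S \<Longrightarrow> edge_ends e \<subseteq> K" and cf: "circ_free S"
  shows "card S < card K"
proof -
  let ?V = "{z::real^('m\<times>'n). nz z \<subseteq> S}"
  let ?W = "{w::real^('m+'n). nz w \<subseteq> K}"
  have img: "Lmap ` ?V \<subseteq> Hsp \<inter> ?W"
  proof
    fix w assume "w \<in> Lmap ` ?V"
    then obtain z where z: "nz z \<subseteq> S" "w = Lmap z" by auto
    have "w $ v = 0" if v: "v \<notin> K" for v
    proof (cases v)
      case (Inl \<mu>)
      have "z $ (\<mu>, \<nu>) = 0" for \<nu>
      proof (rule ccontr)
        assume "z $ (\<mu>, \<nu>) \<noteq> 0"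
        then have "(\<mu>,\<nu>) \<in> S" using z by (auto simp: nz_def)
        then show False using SK v Inl by (auto simp: edge_ends_def)
      qed
      then show ?thesis using z Inl by (simp add: Lmap_Inl)
    next
      case (Inr \<nu>)
      have "z $ (\<mu>, \<nu>) = 0" for \<mu>
      proof (rule ccontr)
        assume "z $ (\<mu>, \<nu>) \<noteq> 0"
        then have "(\<mu>,\<nu>) \<in> S" using z by (auto simp: nz_def)
        then show False using SK v Inr by (auto simp: edge_ends_def)
      qed
      then show ?thesis using z Inr by (simp add: Lmap_Inr)
    qed
    then show "w \<in> Hsp \<inter> ?W" using z Lmap_in_Hsp by (auto simp: nz_def)
  qed
  have "dim (Lmap ` ?V) = dim ?V"
    by (rule dim_image_eq[OF linear_Lmap inj_Lmap[OF cf]])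
  then have "card S = dim (Lmap ` ?V)" by (simp add: dim_nz)
  also have "\<dots> \<le> dim (Hsp \<inter> ?W)" using img by (rule dim_subset)
  also have "\<dots> < dim ?W"
  proof (rule dim_psubset)
    obtain k where k: "k \<in> K" using K by auto
    have s1: "subspace (Hsp \<inter> ?W)" by (rule subspace_inter[OF subspace_Hsp subspace_nz])
    have e1: "span (Hsp \<inter> ?W) = Hsp \<inter> ?W" using s1 by (simp add: span_eq_iff)
    have e2: "span ?W = ?W" using subspace_nz by (simp add: span_eq_iff)
    have "axis k 1 \<in> ?W" "axis k 1 \<notin> Hsp" using k axis_notin_Hsp by (auto simp: nz_axis)
    then have ps: "Hsp \<inter> ?W \<subset> ?W" by blast
    show "span (Hsp \<inter> ?W) \<subset> span ?W" unfolding e1 e2 by (rule ps)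
  qed
  also have "\<dots> = card K" by (rule dim_nz)
  finally show ?thesis .
qed

lemma surj_Lmap:
  fixes T :: "('m::finite \<times> 'n::finite) set"
  assumes cf: "circ_free T" and cT: "card T + 1 = CARD('m + 'n)" and w: "w \<in> Hsp"
  shows "\<exists>z. nz z \<subseteq> T \<and> Lmap z = w"
proof -
  let ?V = "{z::real^('m\<times>'n). nz z \<subseteq> T}"
  have img: "Lmap ` ?V \<subseteq> Hsp" using Lmap_in_Hsp by auto
  have "dim (Lmap ` ?V) = dim ?V"
    by (rule dim_image_eq[OF linear_Lmap inj_Lmap[OF cf]])
  then have d1: "dim (Lmap ` ?V) = card T" by (simp add: dim_nz)
  have "dim (Hsp :: (real^('m+'n)) set) < dim (UNIV :: (real^('m+'n)) set)"
  proof (rule dim_psubset)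
    have "axis (undefined::'m+'n) (1::real) \<notin> (Hsp :: (real^('m+'n)) set)" by (rule axis_notin_Hsp)
    then have "(Hsp :: (real^('m+'n)) set) \<subset> UNIV" by blast
    then show "span (Hsp :: (real^('m+'n)) set) \<subset> span UNIV" unfolding span_Hsp span_UNIV .
  qed
  also have "\<dots> = CARD('m + 'n)" by simp
  finally have "dim (Hsp :: (real^('m+'n)) set) \<le> dim (Lmap ` ?V)" using d1 cT by simp
  then have e: "span (Lmap ` ?V) = span Hsp" by (rule dim_eq_span[OF img])
  have eV: "span (Lmap ` ?V) = Lmap ` ?V"
    using linear_subspace_image[OF linear_Lmap subspace_nz] by (simp add: span_eq_iff)
  have "Lmap ` ?V = Hsp" using e span_Hsp eV by metis
  then have "w \<in> Lmap ` ?V" using w by simp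
  then show ?thesis by auto
qed




lemma card_sum_type: "CARD('a::finite + 'b::finite) = CARD('a) + CARD('b)"
  by (metis UNIV_Plus_UNIV card_Plus finite)

definition tgt :: "('m::finite \<Rightarrow> nat) \<Rightarrow> real^('m + 'n::finite)" where
  "tgt d = (\<chi> v. case v of Inl \<mu> \<Rightarrow> 1 + real CARD('m) * real (d \<mu>) | Inr \<nu> \<Rightarrow> real CARD('m))"

lemma P_iff: "x \<in> (P_d d :: (real^('m::finite \<times> 'n::finite)) set) \<longleftrightarrow>
   (\<forall>e. x$e \<ge> 0) \<and> Lmap x = (tgt d :: real^('m + 'n))"
  unfolding P_d_def transport_polytope_def
  by (auto simp: vec_eq_iff tgt_def Lmap_def split: sum.split)

lemma tgt_Hsp:
  fixes d :: "'m::finite \<Rightarrow> nat"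
  assumes "CARD('n::finite) = 1 + (\<Sum>\<mu>\<in>UNIV. d \<mu>)"
  shows "(tgt d :: real^('m + 'n)) \<in> Hsp"
proof -
  have "(\<Sum>\<mu>\<in>(UNIV::'m set). 1 + real CARD('m) * real (d \<mu>)) = real CARD('m) * real CARD('n)"
    using assms by (simp add: sum.distrib sum_distrib_left[symmetric] algebra_simps)
  then show ?thesis
    unfolding Hsp_def by (simp add: sum_UNIV_Plus sg_def tgt_def sum_negf)
qed

lemma supp_nz: "(\<forall>e. x$e \<ge> 0) \<Longrightarrow> supp x = nz x"
  by (auto simp: supp_def nz_def less_le)

lemma Lmap_add_scale: "Lmap (x + s *\<^sub>R c) = Lmap x + s *\<^sub>R Lmap c"
  by (simp add: vec_eq_iff Lmap_def sum.distrib sum_distrib_left split: sum.split)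

lemma Lmap_diff_scale: "Lmap (x - s *\<^sub>R c) = Lmap x - s *\<^sub>R Lmap c"
  by (simp add: vec_eq_iff Lmap_def sum_subtractf sum_distrib_left split: sum.split)

lemma perturb:
  fixes x :: "real^('m::finite \<times> 'n::finite)"
  assumes x: "x \<in> P_d d" and c: "Lmap c = 0" "nz c \<subseteq> supp x"
  shows "\<exists>s>0. x + s *\<^sub>R c \<in> P_d d \<and> x - s *\<^sub>R c \<in> P_d d"
proof -
  define s where "s = Min (insert 1 ((\<lambda>e. x$e / \<bar>c$e\<bar>) ` nz c))"
  have fin: "finite (insert 1 ((\<lambda>e. x$e / \<bar>c$e\<bar>) ` nz c))" by simp
  have pos: "x$e / \<bar>c$e\<bar> > 0" if "e \<in> nz c" for e
    using that c(2) by (auto simp: nz_def supp_def)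
  have s0: "s > 0" unfolding s_def using fin pos by (subst Min_gr_iff) auto
  have sle: "s \<le> x$e / \<bar>c$e\<bar>" if "e \<in> nz c" for e
    unfolding s_def using fin that by (intro Min_le) auto
  have x0: "\<And>e. x$e \<ge> 0" and xL: "Lmap x = tgt d" using x unfolding P_iff by blast+
  have bnd: "s * \<bar>c$e\<bar> \<le> x$e" for e
  proof (cases "e \<in> nz c")
    case True
    then have "\<bar>c$e\<bar> > 0" by (auto simp: nz_def)
    then show ?thesis using sle[OF True] by (simp add: field_simps)
  next
    case False then show ?thesis using x0 by (simp add: nz_def)
  qed
  have ab: "x$e + s * c$e \<ge> 0 \<and> x$e - s * c$e \<ge> 0" for e
  proof -
    have "\<bar>s * c$e\<bar> \<le> x$e" using bnd[of e] s0 by (simp add: abs_mult)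
    then show ?thesis by (simp add: abs_le_iff)
  qed
  have "x + s *\<^sub>R c \<in> P_d d"
    unfolding P_iff using ab xL c(1) by (simp add: Lmap_add_scale)
  moreover have "x - s *\<^sub>R c \<in> P_d d"
    unfolding P_iff using ab xL c(1) by (simp add: Lmap_diff_scale)
  ultimately show ?thesis using s0 by blast
qed

lemma extreme_iff:
  fixes x :: "real^('m::finite \<times> 'n::finite)"
  assumes x: "x \<in> P_d d"
  shows "x extreme_point_of P_d d \<longleftrightarrow> circ_free (supp x)"
proof
  assume ex: "x extreme_point_of P_d d"
  show "circ_free (supp x)" unfolding circ_free_def
  proof (intro allI impI)
    fix c assume c: "Lmap c = 0 \<and> nz c \<subseteq> supp x"
    show "c = 0"
    proof (rule ccontr)
      assume c0: "c \<noteq> 0"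
      obtain s where s: "s > 0" "x + s *\<^sub>R c \<in> P_d d" "x - s *\<^sub>R c \<in> P_d d"
        using perturb[OF x] c by blast
      have "x = midpoint (x - s *\<^sub>R c) (x + s *\<^sub>R c)"
        by (simp add: midpoint_def vec_eq_iff field_simps)
      moreover have "x - s *\<^sub>R c \<noteq> x + s *\<^sub>R c" using s(1) c0
        by (auto simp: vec_eq_iff)
      ultimately have "x \<in> open_segment (x - s *\<^sub>R c) (x + s *\<^sub>R c)"
        using midpoint_in_open_segment by metis
      then show False using ex s unfolding extreme_point_of_def by blast
    qed
  qed
next
  assume cf: "circ_free (supp x)"
  show "x extreme_point_of P_d d" unfolding extreme_point_of_def
  proof (intro conjI ballI)
    fix a b :: "real^('m \<times> 'n)" assume a: "a \<in> P_d d" and b: "b \<in> P_d d"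
    show "x \<notin> open_segment a b"
    proof
      assume "x \<in> open_segment a b"
      then obtain u where u: "a \<noteq> b" "0 < u" "u < 1" "x = (1 - u) *\<^sub>R a + u *\<^sub>R b"
        by (auto simp: in_segment)
      have a0: "\<And>e. a$e \<ge> 0" using a unfolding P_iff by blast
      have b0: "\<And>e. b$e \<ge> 0" using b unfolding P_iff by blast
      have "Lmap (a - b) = 0" using a b by (simp add: Lmap_diff P_iff)
      moreover have "nz (a - b) \<subseteq> supp x"
      proof
        fix e assume "e \<in> nz (a - b)"
        then have ne: "a$e \<noteq> b$e" by (auto simp: nz_def)
        have "x$e = (1-u) * a$e + u * b$e" using u by simp
        moreover have "(1-u) * a$e \<ge> 0" "u * b$e \<ge> 0" using a0[of e] b0[of e] u by auto
        moreover have "(1-u) * a$e > 0 \<or> u * b$e > 0"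
          using ne a0 b0 u by (metis mult_pos_pos diff_gt_0_iff_gt order_le_less)
        ultimately show "e \<in> supp x" by (auto simp: supp_def)
      qed
      ultimately have "a - b = 0" using cf unfolding circ_free_def by blast
      then show False using u by simp
    qed
  qed (use x in auto)
qed

lemma circ_free_mono: "circ_free S' \<Longrightarrow> S \<subseteq> S' \<Longrightarrow> circ_free S"
  unfolding circ_free_def by blast

lemma deg_nz_ne1:
  fixes c :: "real^('m::finite \<times> 'n::finite)"
  assumes "Lmap c = 0"
  shows "deg (nz c) v \<noteq> 1"
proof
  assume d1: "deg (nz c) v = 1"
  then obtain e0 where e0: "{e \<in> nz c. v \<in> edge_ends e} = {e0}"
    unfolding deg_def by (meson card_1_singletonE)
  show False
  proof (cases v)
    case (Inl \<mu>)
    have e0': "e0 \<in> nz c" "fst e0 = \<mu>" using e0 Inl by (auto simp: edge_ends_def)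
    have z: "c$(\<mu>,\<nu>) = 0" if "\<nu> \<noteq> snd e0" for \<nu>
    proof (rule ccontr)
      assume "c$(\<mu>,\<nu>) \<noteq> 0"
      then have "(\<mu>,\<nu>) \<in> {e \<in> nz c. v \<in> edge_ends e}" using Inl by (auto simp: nz_def edge_ends_def)
      then show False using e0 that by auto
    qed
    have "(\<Sum>\<nu>\<in>UNIV. c$(\<mu>,\<nu>)) = c$(\<mu>, snd e0)"
      using z by (subst sum.remove[of _ "snd e0"]) (auto intro: sum.neutral)
    moreover have "(\<Sum>\<nu>\<in>UNIV. c$(\<mu>,\<nu>)) = 0" using assms by (metis Lmap_Inl zero_index)
    moreover have "c$(\<mu>, snd e0) \<noteq> 0" using e0' by (cases e0) (auto simp: nz_def)
    ultimately show False by simp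
  next
    case (Inr \<nu>)
    have e0': "e0 \<in> nz c" "snd e0 = \<nu>" using e0 Inr by (auto simp: edge_ends_def)
    have z: "c$(\<mu>,\<nu>) = 0" if "\<mu> \<noteq> fst e0" for \<mu>
    proof (rule ccontr)
      assume "c$(\<mu>,\<nu>) \<noteq> 0"
      then have "(\<mu>,\<nu>) \<in> {e \<in> nz c. v \<in> edge_ends e}" using Inr by (auto simp: nz_def edge_ends_def)
      then show False using e0 that by auto
    qed
    have "(\<Sum>\<mu>\<in>UNIV. c$(\<mu>,\<nu>)) = c$(fst e0, \<nu>)"
      using z by (subst sum.remove[of _ "fst e0"]) (auto intro: sum.neutral)
    moreover have "(\<Sum>\<mu>\<in>UNIV. c$(\<mu>,\<nu>)) = 0" using assms by (metis Lmap_Inr zero_index)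
    moreover have "c$(fst e0, \<nu>) \<noteq> 0" using e0' by (cases e0) (auto simp: nz_def)
    ultimately show False by simp
  qed
qed

lemma acyclic_circ_free:
  fixes S :: "('m::finite \<times> 'n::finite) set"
  assumes "acyclic_graph S"
  shows "circ_free S"
  unfolding circ_free_def
proof (intro allI impI)
  fix c :: "real^('m \<times> 'n)" assume c: "Lmap c = 0 \<and> nz c \<subseteq> S"
  show "c = 0"
  proof (rule ccontr)
    assume "c \<noteq> 0"
    then have "nz c \<noteq> {}" by (auto simp: nz_def vec_eq_iff)
    then obtain vs where "is_cycle (nz c) vs" using core_cycle deg_nz_ne1 c by blast
    then have "is_cycle S vs" using c is_cycle_mono by blast
    then show False using assms by (auto simp: acyclic_graph_def)
  qed
qed

lemma suc_mod: "j < L \<Longrightarrow> (j + 1) mod L = (if Suc j = L then 0 else Suc j)"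
  by (cases "Suc j = L") auto

lemma cycle_not_circ_free:
  fixes S :: "('m::finite \<times> 'n::finite) set"
  assumes cyc: "is_cycle S vs"
  shows "\<not> circ_free S"
proof
  assume cf: "circ_free S"
  let ?L = "length vs"
  let ?pr = "\<lambda>i. {vs ! i, vs ! ((i + 1) mod ?L)}"
  let ?Ce = "cycle_edges S vs"
  have L3: "?L \<ge> 3" and dist: "distinct vs" using cyc by (auto simp: is_cycle_def)
  have cf2: "circ_free ?Ce" using cf cycle_edges_sub circ_free_mono by blast
  have ends: "edge_ends e \<subseteq> set vs" if "e \<in> ?Ce" for e
  proof -
    have L0: "?L > 0" using L3 by linarith
    have md: "(i + 1) mod ?L < ?L" for i using L0 by simp
    show ?thesis using that L3 nth_mem[OF md] by (auto simp: cycle_edges_def)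
  qed
  have "set vs \<noteq> {}" using L3 by auto
  then have lt: "card ?Ce < card (set vs)" using lemmaW ends cf2 by blast
  have inj: "inj_on ?pr {..<?L}"
  proof (rule inj_onI)
    fix i j assume i0: "i \<in> {..<?L}" and j0: "j \<in> {..<?L}" and eq: "?pr i = ?pr j"
    have i: "i < ?L" and j: "j < ?L" using i0 j0 by auto
    have L0: "?L > 0" using L3 by linarith
    have mi: "(i + 1) mod ?L < ?L" and mj: "(j + 1) mod ?L < ?L" using L0 by simp_all
    have nth_inj: "a = b" if "a < ?L" "b < ?L" "vs ! a = vs ! b" for a b
      using dist that by (simp add: nth_eq_iff_index_eq)
    have "(vs ! i = vs ! j \<and> vs ! ((i + 1) mod ?L) = vs ! ((j + 1) mod ?L)) \<or>
          (vs ! i = vs ! ((j + 1) mod ?L) \<and> vs ! ((i + 1) mod ?L) = vs ! j)"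
      using eq unfolding doubleton_eq_iff .
    then show "i = j"
    proof
      assume "vs ! i = vs ! j \<and> vs ! ((i + 1) mod ?L) = vs ! ((j + 1) mod ?L)"
      then show ?thesis using nth_inj[OF i j] by blast
    next
      assume 2: "vs ! i = vs ! ((j + 1) mod ?L) \<and> vs ! ((i + 1) mod ?L) = vs ! j"
      have q1: "i = (j + 1) mod ?L" using nth_inj[OF i mj] 2 by blast
      have q2: "(i + 1) mod ?L = j" using nth_inj[OF mi j] 2 by blast
      have h1: "i = (if Suc j = ?L then 0 else Suc j)" using q1 suc_mod[OF j] by (rule trans)
      have h2: "j = (if Suc i = ?L then 0 else Suc i)" using q2 suc_mod[OF i] by (metis)
      show ?thesis
      proof (cases "Suc j = ?L")
        case True
        then have i0: "i = 0" using h1 by (metis (full_types))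
        have "Suc i \<noteq> ?L" using i0 L3 by linarith
        then have "j = Suc i" using h2 by (metis (full_types))
        then show ?thesis using True i0 L3 by linarith
      next
        case False
        then have i1: "i = Suc j" using h1 by (metis (full_types))
        show ?thesis
        proof (cases "Suc i = ?L")
          case True
          then have "j = 0" using h2 by (metis (full_types))
          then show ?thesis using True i1 L3 by linarith
        next
          case False
          then have "j = Suc i" using h2 by (metis (full_types))
          then show ?thesis using i1 by linarith
        qed
      qed
    qed
  qed
  have "?pr ` {..<?L} \<subseteq> edge_ends ` ?Ce"
  proof
    fix p assume "p \<in> ?pr ` {..<?L}"
    then obtain i where i: "i < ?L" "p = ?pr i" by auto
    then have "(vs ! i, vs ! ((i + 1) mod ?L)) \<in> adjrel S" using cyc by (auto simp: is_cycle_def)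
    then obtain e where "e \<in> S" "edge_ends e = p" using i by (auto simp: adjrel_def)
    then show "p \<in> edge_ends ` ?Ce" using i by (auto simp: cycle_edges_def)
  qed
  then have "card (?pr ` {..<?L}) \<le> card (edge_ends ` ?Ce)" by (intro card_mono) auto
  also have "\<dots> \<le> card ?Ce" by (rule card_image_le) simp
  finally have "?L \<le> card ?Ce" using card_image[OF inj] by simp
  moreover have "card (set vs) = ?L" using dist by (simp add: distinct_card)
  ultimately show False using lt by simp
qed




lemma card_deg_sum: "card (T :: ('m::finite \<times> 'n::finite) set) = (\<Sum>\<mu>\<in>UNIV. source_degree T \<mu>)"
proof -
  have "T = Sigma UNIV (\<lambda>\<mu>. {\<nu>. (\<mu>,\<nu>) \<in> T})" by auto
  then show ?thesis unfolding source_degree_def by (metis card_SigmaI finite)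
qed

lemma sum_d_card:
  fixes d :: "'m::finite \<Rightarrow> nat"
  assumes "CARD('n::finite) = 1 + (\<Sum>\<mu>\<in>UNIV. d \<mu>)"
  shows "(\<Sum>\<mu>\<in>UNIV. 1 + d \<mu>) + 1 = CARD('m + 'n)"
proof -
  have "(\<Sum>\<mu>\<in>(UNIV::'m set). 1 + d \<mu>) = CARD('m) + (\<Sum>\<mu>\<in>UNIV. d \<mu>)"
    by (subst sum.distrib) simp
  then show ?thesis using assms by (simp add: card_sum_type)
qed

lemma trees_card:
  fixes d :: "'m::finite \<Rightarrow> nat"
  assumes "CARD('n::finite) = 1 + (\<Sum>\<mu>\<in>UNIV. d \<mu>)" and "T \<in> (trees_d d :: ('m \<times> 'n) set set)"
  shows "card T + 1 = CARD('m + 'n)"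
  using assms sum_d_card[OF assms(1)] card_deg_sum[of T] by (simp add: trees_d_def)

lemma P_facts:
  fixes x :: "real^('m::finite \<times> 'n::finite)"
  assumes "x \<in> P_d d"
  shows "\<And>e. x$e \<ge> 0" "\<And>\<mu>. (\<Sum>\<nu>\<in>UNIV. x$(\<mu>,\<nu>)) = 1 + real CARD('m) * real (d \<mu>)"
    "\<And>\<nu>. (\<Sum>\<mu>\<in>UNIV. x$(\<mu>,\<nu>)) = real CARD('m)"
  using assms unfolding P_d_def transport_polytope_def by auto

lemma closed_sources:
  fixes x :: "real^('m::finite \<times> 'n::finite)"
  assumes x: "x \<in> P_d d" and K: "K \<noteq> {}"
    and cl: "\<And>u v. u \<in> K \<Longrightarrow> (u,v) \<in> adjrel (supp x) \<Longrightarrow> v \<in> K"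
  shows "Inl \<mu> \<in> K"
proof -
  define A where "A = {a. Inl a \<in> K}"
  define B where "B = {b. Inr b \<in> K}"
  let ?m = "CARD('m)"
  note xf = P_facts[OF x]
  have key: "(a \<in> A \<longleftrightarrow> b \<in> B)" if "x$(a,b) \<noteq> 0" for a b
  proof -
    have "(a,b) \<in> supp x" using that xf(1)[of "(a,b)"] by (auto simp: supp_def)
    then have "(Inl a, Inr b) \<in> adjrel (supp x)" "(Inr b, Inl a) \<in> adjrel (supp x)"
      by (auto simp: adjrel_iff)
    then show ?thesis using cl unfolding A_def B_def by blast
  qed
  have "(\<Sum>a\<in>A. 1 + real ?m * real (d a)) = (\<Sum>a\<in>A. \<Sum>b\<in>UNIV. x$(a,b))" using xf(2) by simp
  also have "\<dots> = (\<Sum>p\<in>A \<times> UNIV. x$p)" by (simp add: sum.cartesian_product)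
  also have "\<dots> = (\<Sum>p\<in>A \<times> B. x$p)"
    by (rule sum.mono_neutral_right) (use key in auto)
  also have "\<dots> = (\<Sum>p\<in>UNIV \<times> B. x$p)"
    by (rule sum.mono_neutral_left) (use key in auto)
  also have "\<dots> = (\<Sum>a\<in>UNIV. \<Sum>b\<in>B. x$(a,b))" by (simp add: sum.cartesian_product)
  also have "\<dots> = (\<Sum>b\<in>B. \<Sum>a\<in>UNIV. x$(a,b))" by (rule sum.swap)
  also have "\<dots> = real ?m * real (card B)" using xf(3) by simp
  finally have "real (card A) + real ?m * real (\<Sum>a\<in>A. d a) = real ?m * real (card B)"
    by (simp add: sum.distrib sum_distrib_left)
  then have eq: "card A + ?m * (\<Sum>a\<in>A. d a) = ?m * card B" by (metis of_nat_add of_nat_mult of_nat_eq_iff)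
  have m0: "?m > 0" by simp
  have "A \<noteq> {}"
  proof
    assume "A = {}"
    then have "card B = 0" using eq m0 by simp
    then have "B = {}" by simp
    have "k \<notin> K" for k
      using \<open>A = {}\<close> \<open>B = {}\<close> unfolding A_def B_def by (cases k) auto
    then have "K = {}" by blast
    then show False using K by simp
  qed
  then have "card A > 0" by (simp add: card_gt_0_iff)
  moreover have "?m dvd card A"
  proof -
    have "?m dvd card A + ?m * (\<Sum>a\<in>A. d a)" unfolding eq by simp
    then show ?thesis using dvd_add_left_iff[of ?m "?m * (\<Sum>a\<in>A. d a)" "card A"] by simp
  qed
  ultimately have "card A \<ge> ?m" by (simp add: dvd_imp_le)
  then have "A = UNIV" by (metis card_seteq finite top_greatest)
  then show ?thesis unfolding A_def by auto
qed

lemma vertex_connected: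
  fixes x :: "real^('m::finite \<times> 'n::finite)"
  assumes x: "x \<in> P_d d"
  shows "connected_graph (supp x)"
  unfolding connected_graph_def
proof (rule ccontr)
  let ?R = "adjrel (supp x)"
  assume "\<not> (\<forall>u v. (u, v) \<in> ?R\<^sup>*)"
  then obtain u v where uv: "(u,v) \<notin> ?R\<^sup>*" by blast
  define K where "K = {w. (u,w) \<in> ?R\<^sup>*}"
  have c1: "Inl undefined \<in> K"
  proof (rule closed_sources[OF x])
    show "K \<noteq> {}" unfolding K_def by blast
  next
    fix a b assume "a \<in> K" "(a, b) \<in> ?R"
    then show "b \<in> K" unfolding K_def by (simp add: rtrancl_into_rtrancl)
  qed
  have c2: "Inl undefined \<in> - K"
  proof (rule closed_sources[OF x])
    show "- K \<noteq> {}" using uv K_def by auto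
  next
    fix a b assume a: "a \<in> - K" and ab: "(a, b) \<in> ?R"
    show "b \<in> - K"
    proof
      assume "b \<in> K"
      then have "(u, b) \<in> ?R\<^sup>*" by (simp add: K_def)
      moreover have "(b, a) \<in> ?R" using ab by (rule adjrel_sym)
      ultimately have "(u, a) \<in> ?R\<^sup>*" by (rule rtrancl_into_rtrancl)
      then show False using a by (simp add: K_def)
    qed
  qed
  show False using c1 c2 by simp
qed

lemma deg_ge:
  fixes x :: "real^('m::finite \<times> 'n::finite)"
  assumes x: "x \<in> P_d d"
  shows "source_degree (supp x) \<mu> \<ge> 1 + d \<mu>"
proof -
  note xf = P_facts[OF x]
  let ?m = "CARD('m)"
  let ?R = "{\<nu>. (\<mu>,\<nu>) \<in> supp x}"
  have le: "x$(\<mu>,\<nu>) \<le> real ?m" for \<nu>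
  proof -
    have "x$(\<mu>,\<nu>) \<le> (\<Sum>a\<in>UNIV. x$(a,\<nu>))"
      using member_le_sum[of \<mu> UNIV "\<lambda>a. x$(a,\<nu>)"] xf(1) by auto
    then show ?thesis using xf(3) by simp
  qed
  have "1 + real ?m * real (d \<mu>) = (\<Sum>\<nu>\<in>UNIV. x$(\<mu>,\<nu>))" using xf(2) by simp
  also have "\<dots> = (\<Sum>\<nu>\<in>?R. x$(\<mu>,\<nu>))"
    by (rule sum.mono_neutral_right) (use xf(1) in \<open>auto simp: supp_def less_le\<close>)
  also have "\<dots> \<le> (\<Sum>\<nu>\<in>?R. real ?m)" by (rule sum_mono) (rule le)
  also have "\<dots> = real ?m * real (card ?R)" by simp
  finally have "1 + real ?m * real (d \<mu>) \<le> real ?m * real (card ?R)" .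
  then have "real (?m * d \<mu>) < real (?m * card ?R)" unfolding of_nat_mult by linarith
  then have "?m * d \<mu> < ?m * card ?R" by (simp only: of_nat_less_iff)
  then have "d \<mu> < card ?R" by simp
  then show ?thesis unfolding source_degree_def by simp
qed

lemma vertex_tree:
  fixes d :: "'m::finite \<Rightarrow> nat"
  assumes card: "CARD('n::finite) = 1 + (\<Sum>\<mu>\<in>UNIV. d \<mu>)"
    and xv: "x \<in> vertices (P_d d :: (real^('m \<times> 'n)) set)"
  shows "supp x \<in> trees_d d"
proof -
  have xe: "x extreme_point_of P_d d" using xv by (simp add: vertices_def)
  then have x: "x \<in> P_d d" by (simp add: extreme_point_of_def)
  have cf: "circ_free (supp x)" using extreme_iff[OF x] xe by simp
  have acyc: "acyclic_graph (supp x)" using cycle_not_circ_free cf by (auto simp: acyclic_graph_def)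
  have conn: "connected_graph (supp x)" by (rule vertex_connected[OF x])
  have "card (supp x) < card (UNIV :: ('m+'n) set)"
    by (rule lemmaW[OF _ _ cf]) auto
  then have "(\<Sum>\<mu>\<in>UNIV. source_degree (supp x) \<mu>) \<le> (\<Sum>\<mu>\<in>UNIV. 1 + d \<mu>)"
    using sum_d_card[OF card] card_deg_sum[of "supp x"] by simp
  moreover have "(\<Sum>\<mu>\<in>UNIV. 1 + d \<mu>) \<le> (\<Sum>\<mu>\<in>UNIV. source_degree (supp x) \<mu>)"
    by (rule sum_mono) (rule deg_ge[OF x])
  ultimately have eqs: "(\<Sum>\<mu>\<in>UNIV. 1 + d \<mu>) = (\<Sum>\<mu>\<in>UNIV. source_degree (supp x) \<mu>)"
    by linarith
  have "1 + d \<mu> = source_degree (supp x) \<mu>" for \<mu>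
    by (rule sum_mono_inv[OF eqs]) (use deg_ge[OF x] in auto)
  then have "source_degree (supp x) \<mu> = 1 + d \<mu>" for \<mu> by simp
  then show ?thesis using acyc conn by (simp add: trees_d_def spanning_tree_def)
qed

lemma vertex_inj:
  fixes x y :: "real^('m::finite \<times> 'n::finite)"
  assumes xv: "x \<in> vertices (P_d d)" and yv: "y \<in> vertices (P_d d)" and eq: "supp x = supp y"
  shows "x = y"
proof -
  have xe: "x extreme_point_of P_d d" using xv by (simp add: vertices_def)
  then have x: "x \<in> P_d d" by (simp add: extreme_point_of_def)
  have y: "y \<in> P_d d" using yv by (simp add: vertices_def extreme_point_of_def)
  have cf: "circ_free (supp x)" using extreme_iff[OF x] xe by simp
  have "Lmap (x - y) = 0" using x y by (simp add: Lmap_diff P_iff)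
  moreover have "nz (x - y) \<subseteq> supp x"
  proof
    fix e assume e: "e \<in> nz (x - y)"
    show "e \<in> supp x"
    proof (rule ccontr)
      assume ne: "e \<notin> supp x"
      then have "e \<notin> supp y" using eq by simp
      then have "y$e = 0" using P_facts(1)[OF y, of e] by (simp add: supp_def)
      moreover have "x$e = 0" using ne P_facts(1)[OF x, of e] by (simp add: supp_def)
      ultimately show False using e by (simp add: nz_def)
    qed
  qed
  ultimately have "x - y = 0" using cf unfolding circ_free_def by blast
  then show ?thesis by simp
qed




lemma len2_cases: "length ws = 2 \<Longrightarrow> \<exists>a b. ws = [a, b]"
  by (cases ws; cases "tl ws") auto

lemma tree_vertex:
  fixes d :: "'m::finite \<Rightarrow> nat"
  assumes card: "CARD('n::finite) = 1 + (\<Sum>\<mu>\<in>UNIV. d \<mu>)"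
    and T: "T \<in> (trees_d d :: ('m \<times> 'n) set set)"
  shows "\<exists>x \<in> vertices (P_d d :: (real^('m \<times> 'n)) set). supp x = T"
proof -
  let ?m = "CARD('m)"
  have acyc: "acyclic_graph T" and degT: "\<And>\<mu>. source_degree T \<mu> = 1 + d \<mu>"
    using T by (auto simp: trees_d_def spanning_tree_def)
  have cf: "circ_free T" by (rule acyclic_circ_free[OF acyc])
  have cT: "card T + 1 = CARD('m + 'n)" by (rule trees_card[OF card T])
  obtain z :: "real^('m\<times>'n)" where z: "nz z \<subseteq> T" "Lmap z = tgt d"
    using surj_Lmap[OF cf cT tgt_Hsp[OF card]] by blast
  have zT: "z$p = 0" if "p \<notin> T" for p using z(1) that by (auto simp: nz_def)
  have rowz: "(\<Sum>b\<in>UNIV. z$(a,b)) = 1 + real ?m * real (d a)" for a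
  proof -
    have "Lmap z $ Inl a = (tgt d :: real^('m+'n)) $ Inl a" using z(2) by simp
    then show ?thesis by (simp add: Lmap_Inl tgt_def)
  qed
  have colz: "(\<Sum>a\<in>UNIV. z$(a,b)) = real ?m" for b
  proof -
    have "Lmap z $ Inr b = (tgt d :: real^('m+'n)) $ Inr b" using z(2) by simp
    then show ?thesis by (simp add: Lmap_Inr tgt_def)
  qed
  have pos: "z$e > 0" if eT: "e \<in> T" for e
  proof -
    obtain \<mu> \<nu> where e: "e = (\<mu>,\<nu>)" by (cases e)
    let ?R = "adjrel (T - {e})"
    define C where "C = {w. (Inr \<nu>, w) \<in> ?R\<^sup>*}"
    have notC: "Inl \<mu> \<notin> C"
    proof
      assume "Inl \<mu> \<in> C"
      then have "(Inr \<nu>, Inl \<mu>) \<in> ?R\<^sup>*" by (simp add: C_def)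
      then obtain ws0 where w0: "ws0 \<noteq> []" "hd ws0 = Inr \<nu>" "last ws0 = Inl \<mu>"
          "successively (\<lambda>x y. (x,y) \<in> ?R) ws0"
        using rtrancl_walk by metis
      then obtain ws where ws: "distinct ws" "ws \<noteq> []" "hd ws = Inr \<nu>" "last ws = Inl \<mu>"
          "successively (\<lambda>x y. (x,y) \<in> ?R) ws"
        using walk_distinct[OF w0(1) w0(4)] by metis
      have len: "length ws \<ge> 3"
      proof (rule ccontr)
        assume "\<not> 3 \<le> length ws"
        moreover have "length ws \<noteq> 0" using ws by simp
        moreover have "length ws \<noteq> 1"
        proof
          assume "length ws = 1"
          then obtain a where "ws = [a]" by (cases ws) auto
          then show False using ws by simp
        qed
        ultimately have "length ws = 2" by linarith
        then obtain a b where ab: "ws = [a, b]" using len2_cases by blast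
        then have "(Inr \<nu>, Inl \<mu>) \<in> ?R" using ws by simp
        then obtain e'' where e'': "e'' \<in> T - {e}" "edge_ends e'' = {Inr \<nu>, Inl \<mu>}"
          by (auto simp: adjrel_def)
        then have "edge_ends e'' = edge_ends e" by (auto simp: e edge_ends_def)
        then show False using e'' edge_ends_eq_iff by blast
      qed
      have succ: "successively (\<lambda>x y. (x,y) \<in> adjrel T) ws"
        using ws(5) by (rule successively_mono) (use adjrel_mono[of "T - {e}" T] in blast)
      have "(last ws, hd ws) \<in> adjrel T" using ws eT e by (auto simp: adjrel_iff)
      then have "is_cycle T ws" using is_cycle_intro len ws(1) succ by blast
      then show False using acyc by (auto simp: acyclic_graph_def)
    qed
    have nuC: "Inr \<nu> \<in> C" by (simp add: C_def)
    have clC: "v \<in> C" if "u \<in> C" "(u,v) \<in> ?R" for u v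
      using that unfolding C_def by (simp add: rtrancl_into_rtrancl)
    have clD: "u \<in> C" if "v \<in> C" "(u,v) \<in> ?R" for u v
      using clC[OF that(1) adjrel_sym[OF that(2)]] .
    define A where "A = {a. Inl a \<in> C}"
    define B where "B = {b. Inr b \<in> C}"
    define EC where "EC = {p \<in> T. fst p \<in> A}"
    define ED where "ED = {p \<in> T - {e}. fst p \<notin> A}"
    have muA: "\<mu> \<notin> A" using notC by (simp add: A_def)
    have nuB: "\<nu> \<in> B" using nuC by (simp add: B_def)
    have eEC: "e \<notin> EC" using muA by (simp add: EC_def e)
    have EC_sub: "p \<in> T - {e} \<and> snd p \<in> B" if "p \<in> EC" for p
    proof -
      obtain a b where p: "p = (a,b)" by (cases p)
      have pT: "p \<in> T - {e}" using that eEC by (auto simp: EC_def)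
      then have "(Inl a, Inr b) \<in> ?R" by (auto simp: adjrel_iff p)
      moreover have "Inl a \<in> C" using that by (simp add: EC_def A_def p)
      ultimately have "Inr b \<in> C" using clC by blast
      then show ?thesis using pT by (simp add: B_def p)
    qed
    have ED_sub: "snd p \<notin> B" if "p \<in> ED" for p
    proof
      assume sB: "snd p \<in> B"
      obtain a b where p: "p = (a,b)" by (cases p)
      have pT: "p \<in> T - {e}" using that by (auto simp: ED_def)
      then have "(Inl a, Inr b) \<in> ?R" by (auto simp: adjrel_iff p)
      moreover have "Inr b \<in> C" using sB by (simp add: B_def p)
      ultimately have "Inl a \<in> C" using clD by blast
      then show False using that by (simp add: ED_def A_def p)
    qed
    have Tsplit: "T = insert e (EC \<union> ED)" using eT by (auto simp: EC_def ED_def)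
    have disj: "EC \<inter> ED = {}" by (auto simp: EC_def ED_def)
    have eED: "e \<notin> ED" by (simp add: ED_def)
    have cardT: "card T = Suc (card EC + card ED)"
      unfolding Tsplit using eEC eED disj by (simp add: card_Un_disjoint)
    have cfEC: "circ_free EC" using cf by (rule circ_free_mono) (auto simp: EC_def)
    have cfED: "circ_free ED" using cf by (rule circ_free_mono) (auto simp: ED_def)
    have W1: "card EC < card C"
    proof (rule lemmaW[OF _ _ cfEC])
      show "C \<noteq> {}" using nuC by blast
    next
      fix p assume pE: "p \<in> EC"
      obtain a b where p: "p = (a,b)" by (cases p)
      have "Inl a \<in> C" using pE by (simp add: EC_def A_def p)
      moreover have "Inr b \<in> C" using EC_sub[OF pE] by (simp add: B_def p)
      ultimately show "edge_ends p \<subseteq> C" by (simp add: edge_ends_def p)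
    qed
    have W2: "card ED < card (- C)"
    proof (rule lemmaW[OF _ _ cfED])
      show "- C \<noteq> {}" using notC by blast
    next
      fix p assume pE: "p \<in> ED"
      obtain a b where p: "p = (a,b)" by (cases p)
      have "Inl a \<notin> C" using pE by (simp add: ED_def A_def p)
      moreover have "Inr b \<notin> C" using ED_sub[OF pE] by (simp add: B_def p)
      ultimately show "edge_ends p \<subseteq> - C" by (simp add: edge_ends_def p)
    qed
    have cardCD: "card C + card (- C) = CARD('m + 'n)"
    proof -
      have "card (C \<union> - C) = card C + card (- C)" by (rule card_Un_disjoint) auto
      then show ?thesis by simp
    qed
    have cEC: "card EC + 1 = card C" using W1 W2 cardCD cardT cT by linarith
    have CAB: "C = A <+> B"
    proof (rule set_eqI)
      fix w show "w \<in> C \<longleftrightarrow> w \<in> A <+> B" by (cases w) (auto simp: A_def B_def)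
    qed
    have cC: "card C = card A + card B" unfolding CAB by (rule card_Plus) simp_all
    have "EC = Sigma A (\<lambda>a. {b. (a,b) \<in> T})" by (auto simp: EC_def)
    then have "card EC = (\<Sum>a\<in>A. source_degree T a)"
      unfolding source_degree_def by (simp add: card_SigmaI)
    also have "\<dots> = (\<Sum>a\<in>A. 1 + d a)" using degT by simp
    also have "\<dots> = card A + (\<Sum>a\<in>A. d a)" by (subst sum.distrib) simp
    finally have "(\<Sum>a\<in>A. d a) + 1 = card B" using cEC cC by linarith
    then have dB: "real (\<Sum>a\<in>A. d a) + 1 = real (card B)" by (metis of_nat_1 of_nat_add)
    have S1: "(\<Sum>a\<in>A. 1 + real ?m * real (d a)) = (\<Sum>p\<in>EC. z$p)"
    proof -
      have "(\<Sum>a\<in>A. 1 + real ?m * real (d a)) = (\<Sum>a\<in>A. \<Sum>b\<in>UNIV. z$(a,b))" using rowz by simp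
      also have "\<dots> = (\<Sum>p\<in>A \<times> UNIV. z$p)" by (simp add: sum.cartesian_product)
      also have "\<dots> = (\<Sum>p\<in>EC. z$p)"
      proof (rule sum.mono_neutral_right)
        show "EC \<subseteq> A \<times> UNIV" by (auto simp: EC_def)
        show "\<forall>p\<in>A \<times> UNIV - EC. z $ p = 0" using zT by (auto simp: EC_def)
      qed simp
      finally show ?thesis .
    qed
    have S2: "(\<Sum>b\<in>B. real ?m) = z$e + (\<Sum>p\<in>EC. z$p)"
    proof -
      have "(\<Sum>b\<in>B. real ?m) = (\<Sum>b\<in>B. \<Sum>a\<in>UNIV. z$(a,b))" using colz by simp
      also have "\<dots> = (\<Sum>a\<in>UNIV. \<Sum>b\<in>B. z$(a,b))" by (rule sum.swap)
      also have "\<dots> = (\<Sum>p\<in>UNIV \<times> B. z$p)" by (simp add: sum.cartesian_product)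
      also have "\<dots> = (\<Sum>p\<in>insert e EC. z$p)"
      proof (rule sum.mono_neutral_right)
        show "insert e EC \<subseteq> UNIV \<times> B" using nuB EC_sub by (auto simp: e)
        show "\<forall>p\<in>UNIV \<times> B - insert e EC. z $ p = 0"
        proof
          fix p assume p: "p \<in> UNIV \<times> B - insert e EC"
          show "z$p = 0"
          proof (cases "p \<in> T")
            case True
            obtain a b where pab: "p = (a,b)" by (cases p)
            have "p \<in> T - {e}" using True p by auto
            then have "(Inl a, Inr b) \<in> ?R" by (auto simp: adjrel_iff pab)
            moreover have "Inr b \<in> C" using p by (simp add: B_def pab)
            ultimately have "Inl a \<in> C" using clD by blast
            then have "p \<in> EC" using True by (simp add: EC_def A_def pab)
            then show ?thesis using p by simp
          qed (rule zT)
        qed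
      qed simp
      also have "\<dots> = z$e + (\<Sum>p\<in>EC. z$p)" using eEC by simp
      finally show ?thesis .
    qed
    have e1: "real (card A) + real ?m * real (\<Sum>a\<in>A. d a) = (\<Sum>p\<in>EC. z$p)"
      using S1 by (simp add: sum.distrib sum_distrib_left of_nat_sum)
    have e2: "real ?m * real (card B) = z$e + (\<Sum>p\<in>EC. z$p)"
      using S2 by (simp add: mult.commute)
    have "z$e = real ?m * real (card B) - (real (card A) + real ?m * real (\<Sum>a\<in>A. d a))"
      using e1 e2 by linarith
    also have "\<dots> = real ?m - real (card A)" using dB by (simp add: algebra_simps flip: dB)
    finally have ze: "z$e = real ?m - real (card A)" .
    have "A \<subset> UNIV" using muA by auto
    then have "card A < ?m" by (metis finite psubset_card_mono)
    then show ?thesis using ze by simp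
  qed
  have z0: "z$p \<ge> 0" for p
    using pos[of p] zT[of p] by (cases "p \<in> T") auto
  have zP: "z \<in> P_d d" unfolding P_iff using z0 z(2) by simp
  have sz: "supp z = T"
    using pos zT by (auto simp: supp_def) (metis less_irrefl)
  have "z extreme_point_of P_d d" using extreme_iff[OF zP] cf sz by simp
  then show ?thesis using sz by (auto simp: vertices_def)
qed




lemma Lmap_comb: "Lmap (a *\<^sub>R x + b *\<^sub>R y) = a *\<^sub>R Lmap x + b *\<^sub>R Lmap y"
  by (simp add: vec_eq_iff Lmap_def sum.distrib sum_distrib_left split: sum.split)

lemma Lmap_scale: "Lmap (t *\<^sub>R v) = t *\<^sub>R Lmap v"
  by (simp add: vec_eq_iff Lmap_def sum_distrib_left split: sum.split)

lemma Lmap_lin4: "Lmap (a - x - t *\<^sub>R (y - x)) = Lmap a - Lmap x - t *\<^sub>R (Lmap y - Lmap x)"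
  by (simp add: Lmap_diff Lmap_scale)

lemma P_comb:
  fixes x y :: "real^('m::finite \<times> 'n::finite)"
  assumes x: "x \<in> P_d d" and y: "y \<in> P_d d" and u: "0 \<le> u" "u \<le> 1"
  shows "(1 - u) *\<^sub>R x + u *\<^sub>R y \<in> P_d d"
proof -
  have x0: "\<And>e. x$e \<ge> 0" and xL: "Lmap x = tgt d" using x unfolding P_iff by blast+
  have y0: "\<And>e. y$e \<ge> 0" and yL: "Lmap y = tgt d" using y unfolding P_iff by blast+
  have "((1 - u) *\<^sub>R x + u *\<^sub>R y) $ e \<ge> 0" for e
    using x0[of e] y0[of e] u by simp
  moreover have "Lmap ((1 - u) *\<^sub>R x + u *\<^sub>R y) = tgt d"
    unfolding Lmap_comb xL yL by (simp add: algebra_simps)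
  ultimately show ?thesis unfolding P_iff by blast
qed

lemma seg_sub:
  fixes x y :: "real^('m::finite \<times> 'n::finite)"
  assumes x: "x \<in> P_d d" and y: "y \<in> P_d d"
  shows "closed_segment x y \<subseteq> P_d d"
  using P_comb[OF x y] by (auto simp: in_segment)

lemma vert_P:
  fixes x :: "real^('m::finite \<times> 'n::finite)"
  assumes "x \<in> vertices (P_d d)"
  shows "x \<in> P_d d" "circ_free (supp x)"
proof -
  have xe: "x extreme_point_of P_d d" using assms by (simp add: vertices_def)
  then show x: "x \<in> P_d d" by (simp add: extreme_point_of_def)
  show "circ_free (supp x)" using extreme_iff[OF x] xe by simp
qed

lemma supp_comb:
  fixes x y :: "real^('m::finite \<times> 'n::finite)"
  assumes x0: "\<And>e. x$e \<ge> 0" and y0: "\<And>e. y$e \<ge> 0" and u: "0 \<le> u" "u \<le> 1"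
  shows "supp ((1 - u) *\<^sub>R x + u *\<^sub>R y) \<subseteq> supp x \<union> supp y"
proof
  fix e assume "e \<in> supp ((1 - u) *\<^sub>R x + u *\<^sub>R y)"
  then have "(1 - u) * x$e + u * y$e > 0" by (simp add: supp_def)
  have "x$e > 0 \<or> y$e > 0"
  proof (rule ccontr)
    assume "\<not> (x$e > 0 \<or> y$e > 0)"
    then have "x$e = 0" "y$e = 0" using x0[of e] y0[of e] by auto
    then show False using \<open>(1 - u) * x$e + u * y$e > 0\<close> by simp
  qed
  then show "e \<in> supp x \<union> supp y" by (auto simp: supp_def)
qed

lemma supp_open:
  fixes a b :: "real^('m::finite \<times> 'n::finite)"
  assumes a0: "\<And>e. a$e \<ge> 0" and b0: "\<And>e. b$e \<ge> 0" and u: "0 < u" "u < 1"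
  shows "supp a \<subseteq> supp ((1 - u) *\<^sub>R a + u *\<^sub>R b)" "supp b \<subseteq> supp ((1 - u) *\<^sub>R a + u *\<^sub>R b)"
proof -
  show "supp a \<subseteq> supp ((1 - u) *\<^sub>R a + u *\<^sub>R b)"
  proof
    fix e assume "e \<in> supp a"
    then have "a$e > 0" by (simp add: supp_def)
    then have "(1 - u) * a$e > 0" "u * b$e \<ge> 0" using u b0[of e] by auto
    then show "e \<in> supp ((1 - u) *\<^sub>R a + u *\<^sub>R b)" by (simp add: supp_def)
  qed
  show "supp b \<subseteq> supp ((1 - u) *\<^sub>R a + u *\<^sub>R b)"
  proof
    fix e assume "e \<in> supp b"
    then have "b$e > 0" by (simp add: supp_def)
    then have "u * b$e > 0" "(1 - u) * a$e \<ge> 0" using u a0[of e] by auto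
    then show "e \<in> supp ((1 - u) *\<^sub>R a + u *\<^sub>R b)" by (simp add: supp_def)
  qed
qed

lemma exch_adj:
  fixes x y :: "real^('m::finite \<times> 'n::finite)"
  assumes xv: "x \<in> vertices (P_d d)" and yv: "y \<in> vertices (P_d d)"
    and ee: "\<epsilon> \<notin> supp x" "\<epsilon>' \<in> supp x" "\<epsilon>' \<noteq> \<epsilon>" "supp y = insert \<epsilon> (supp x - {\<epsilon>'})"
  shows "skeleton_adj (P_d d) x y"
proof -
  let ?T = "supp x"
  have x: "x \<in> P_d d" and cfx: "circ_free ?T" using vert_P[OF xv] by auto
  have y: "y \<in> P_d d" using vert_P[OF yv] by auto
  have x0: "\<And>e. x$e \<ge> 0" and xL: "Lmap x = tgt d" using x unfolding P_iff by blast+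
  have y0: "\<And>e. y$e \<ge> 0" and yL: "Lmap y = tgt d" using y unfolding P_iff by blast+
  have xe: "x$\<epsilon> = 0" using ee(1) x0[of \<epsilon>] by (simp add: supp_def)
  have "\<epsilon> \<in> supp y" using ee(4) by simp
  then have ye: "y$\<epsilon> > 0" by (simp add: supp_def)
  have xe': "x$\<epsilon>' > 0" using ee(2) by (simp add: supp_def)
  have "\<epsilon>' \<notin> supp y" using ee(3,4) by simp
  then have ye': "y$\<epsilon>' = 0" using y0[of \<epsilon>'] by (simp add: supp_def)
  have xy: "x \<noteq> y" using xe ye by auto
  have suppy: "supp y \<subseteq> insert \<epsilon> ?T" using ee(4) by auto
  have inF: "a \<in> closed_segment x y" if a: "a \<in> P_d d" "supp a \<subseteq> insert \<epsilon> ?T" for a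
  proof -
    have a0: "\<And>e. a$e \<ge> 0" and aL: "Lmap a = tgt d" using a(1) unfolding P_iff by blast+
    define t where "t = a$\<epsilon> / y$\<epsilon>"
    define c where "c = a - x - t *\<^sub>R (y - x)"
    have Lc: "Lmap c = 0" unfolding c_def Lmap_lin4 aL xL yL by simp
    have "nz c \<subseteq> ?T"
    proof
      fix e assume ec: "e \<in> nz c"
      have "e \<noteq> \<epsilon>"
      proof
        assume "e = \<epsilon>"
        then have "c$e = a$\<epsilon> - t * y$\<epsilon>" using xe by (simp add: c_def algebra_simps)
        also have "\<dots> = 0" using ye by (simp add: t_def)
        finally show False using ec by (simp add: nz_def)
      qed
      moreover have "e \<in> insert \<epsilon> ?T"
      proof (rule ccontr)
        assume ne: "e \<notin> insert \<epsilon> ?T"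
        then have "e \<notin> supp a" using a(2) by blast
        then have "a$e = 0" using a0[of e] by (simp add: supp_def)
        moreover have "x$e = 0" using ne x0[of e] by (auto simp: supp_def)
        moreover have "y$e = 0"
        proof -
          have "e \<notin> supp y" using ne suppy by blast
          then show ?thesis using y0[of e] by (simp add: supp_def)
        qed
        ultimately show False using ec by (simp add: nz_def c_def)
      qed
      ultimately show "e \<in> ?T" by simp
    qed
    then have "c = 0" using cfx Lc unfolding circ_free_def by blast
    have comp: "a$i = (1 - t) * x$i + t * y$i" for i
    proof -
      have "c$i = 0" using \<open>c = 0\<close> by simp
      then have "a$i - x$i - t * (y$i - x$i) = 0" by (simp add: c_def)
      then show ?thesis by (simp add: algebra_simps)
    qed
    then have aeq: "a = (1 - t) *\<^sub>R x + t *\<^sub>R y" by (simp add: vec_eq_iff)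
    have t0: "t \<ge> 0" unfolding t_def using a0[of \<epsilon>] ye by simp
    have "a$\<epsilon>' = (1 - t) * x$\<epsilon>'" using comp[of \<epsilon>'] ye' by simp
    then have "(1 - t) * x$\<epsilon>' \<ge> 0" using a0[of \<epsilon>'] by simp
    then have t1: "t \<le> 1" using xe' by (simp add: zero_le_mult_iff)
    show ?thesis unfolding in_segment using aeq t0 t1 by blast
  qed
  have face: "closed_segment x y face_of P_d d"
    unfolding face_of_def
  proof (intro conjI ballI impI)
    show "closed_segment x y \<subseteq> P_d d" by (rule seg_sub[OF x y])
    show "convex (closed_segment x y)" by (rule convex_closed_segment)
    fix a b w assume a: "a \<in> P_d d" and b: "b \<in> P_d d" and w: "w \<in> closed_segment x y"
      and wab: "w \<in> open_segment a b"
    obtain s where s: "0 \<le> s" "s \<le> 1" "w = (1 - s) *\<^sub>R x + s *\<^sub>R y" using w by (auto simp: in_segment)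
    have sw: "supp w \<subseteq> insert \<epsilon> ?T" using supp_comb[OF x0 y0 s(1,2)] suppy s(3) by auto
    obtain u where u: "0 < u" "u < 1" "w = (1 - u) *\<^sub>R a + u *\<^sub>R b" using wab by (auto simp: in_segment)
    have a0: "\<And>e. a$e \<ge> 0" using a unfolding P_iff by blast
    have b0: "\<And>e. b$e \<ge> 0" using b unfolding P_iff by blast
    have "supp a \<subseteq> supp w" "supp b \<subseteq> supp w" using supp_open[OF a0 b0 u(1,2)] u(3) by auto
    then show "a \<in> closed_segment x y" "b \<in> closed_segment x y" using inF a b sw by auto
  qed
  have "aff_dim (closed_segment x y) = 1"
    unfolding segment_convex_hull aff_dim_convex_hull aff_dim_2 using xy by simp
  moreover have "x \<in> closed_segment x y" "y \<in> closed_segment x y" by (rule ends_in_segment)+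
  ultimately show ?thesis unfolding skeleton_adj_def using xv yv xy face
    by (intro conjI exI[of _ "closed_segment x y"]) simp_all
qed

lemma pivot_facts:
  assumes "pivot T T'"
  shows "\<exists>\<epsilon> \<epsilon>'. \<epsilon> \<notin> T \<and> \<epsilon>' \<in> T \<and> \<epsilon>' \<noteq> \<epsilon> \<and> T' = insert \<epsilon> (T - {\<epsilon>'})"
  using assms cycle_edges_sub unfolding pivot_def by blast




lemma cycle_edges_mono: "e \<in> cycle_edges E vs \<Longrightarrow> e \<in> E' \<Longrightarrow> e \<in> cycle_edges E' vs"
  by (auto simp: cycle_edges_def)

lemma adj_pivot:
  fixes d :: "'m::finite \<Rightarrow> nat"
  assumes card: "CARD('n::finite) = 1 + (\<Sum>\<mu>\<in>UNIV. d \<mu>)"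
    and adj: "skeleton_adj (P_d d :: (real^('m \<times> 'n)) set) x y"
  shows "pivot (supp x) (supp y)"
proof -
  obtain F where xv: "x \<in> vertices (P_d d)" and yv: "y \<in> vertices (P_d d)" and xy: "x \<noteq> y"
    and F: "F face_of P_d d" "aff_dim F = 1" "x \<in> F" "y \<in> F"
    using adj unfolding skeleton_adj_def by blast
  define T where "T = supp x"
  define T' where "T' = supp y"
  have x: "x \<in> P_d d" and cfx: "circ_free T" using vert_P[OF xv] T_def by auto
  have y: "y \<in> P_d d" and cfy: "circ_free T'" using vert_P[OF yv] T'_def by auto
  have x0: "\<And>e. x$e \<ge> 0" and xL: "Lmap x = tgt d" using x unfolding P_iff by blast+
  have y0: "\<And>e. y$e \<ge> 0" and yL: "Lmap y = tgt d" using y unfolding P_iff by blast+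
  have Tt: "T \<in> trees_d d" using vertex_tree[OF card xv] T_def by simp
  have T't: "T' \<in> trees_d d" using vertex_tree[OF card yv] T'_def by simp
  have acT: "acyclic_graph T" and acT': "acyclic_graph T'"
    using Tt T't by (auto simp: trees_d_def spanning_tree_def)
  have degT: "\<And>\<mu>. source_degree T \<mu> = 1 + d \<mu>" and degT': "\<And>\<mu>. source_degree T' \<mu> = 1 + d \<mu>"
    using Tt T't by (auto simp: trees_d_def)
  have cT: "card T + 1 = CARD('m + 'n)" by (rule trees_card[OF card Tt])
  have cT': "card T' + 1 = CARD('m + 'n)" by (rule trees_card[OF card T't])
  have TT': "T \<noteq> T'" using vertex_inj[OF xv yv] xy T_def T'_def by blast
  obtain \<epsilon> where eps: "\<epsilon> \<in> T'" "\<epsilon> \<notin> T"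
  proof -
    have "\<not> T' \<subseteq> T"
    proof
      assume sub: "T' \<subseteq> T"
      moreover have "card T' = card T" using cT cT' by simp
      ultimately have "T' = T" using card_subset_eq[of T T'] by simp
      then show False using TT' by simp
    qed
    then show ?thesis using that by blast
  qed
  have "\<not> circ_free (insert \<epsilon> T)"
  proof
    assume cf: "circ_free (insert \<epsilon> T)"
    have "card (insert \<epsilon> T) < card (UNIV :: ('m+'n) set)" by (rule lemmaW[OF _ _ cf]) auto
    moreover have "card (insert \<epsilon> T) = card T + 1" using eps by simp
    ultimately show False using cT by simp
  qed
  then obtain c :: "real^('m\<times>'n)" where c: "Lmap c = 0" "nz c \<subseteq> insert \<epsilon> T" "c \<noteq> 0"
    unfolding circ_free_def by blast
  define q where "q = (1 - 1/2::real) *\<^sub>R x + (1/2::real) *\<^sub>R y"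
  have qP: "q \<in> P_d d" unfolding q_def by (rule P_comb[OF x y]) auto
  have "q \<in> closed_segment x y" unfolding q_def in_segment by (intro exI[of _ "1/2::real"]) simp
  moreover have "closed_segment x y \<subseteq> F"
    using face_of_imp_convex[OF F(1)] F(3,4) by (simp add: convex_contains_segment)
  ultimately have qF: "q \<in> F" by blast
  have qc: "q$e = x$e / 2 + y$e / 2" for e by (simp add: q_def)
  have suppq: "nz c \<subseteq> supp q"
  proof
    fix e assume "e \<in> nz c"
    then have "e \<in> insert \<epsilon> T" using c(2) by blast
    then have "x$e > 0 \<or> y$e > 0" using eps(1) by (auto simp: T_def T'_def supp_def)
    then have "q$e > 0" using x0[of e] y0[of e] qc[of e] by auto
    then show "e \<in> supp q" by (simp add: supp_def)
  qed
  obtain s where s: "s > 0" "q + s *\<^sub>R c \<in> P_d d" "q - s *\<^sub>R c \<in> P_d d"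
    using perturb[OF qP c(1) suppq] by blast
  have "q = midpoint (q - s *\<^sub>R c) (q + s *\<^sub>R c)"
    by (simp add: midpoint_def vec_eq_iff field_simps)
  moreover have "q - s *\<^sub>R c \<noteq> q + s *\<^sub>R c" using s(1) c(3) by (auto simp: vec_eq_iff)
  ultimately have qo: "q \<in> open_segment (q - s *\<^sub>R c) (q + s *\<^sub>R c)"
    using midpoint_in_open_segment by metis
  have qsF: "q + s *\<^sub>R c \<in> F" using face_ofD[OF F(1) qo s(3) s(2) qF] by blast
  have "collinear F" unfolding collinear_aff_dim using F(2) by simp
  then obtain u where u: "\<forall>p\<in>F. \<forall>p'\<in>F. \<exists>k. p - p' = k *\<^sub>R u" unfolding collinear_def by blast
  obtain k1 where k1: "y - x = k1 *\<^sub>R u" using u F(3,4) by blast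
  obtain k2 where k2: "(q + s *\<^sub>R c) - x = k2 *\<^sub>R u" using u qsF F(3) by blast
  have k1n: "k1 \<noteq> 0" using k1 xy by auto
  define \<kappa> where "\<kappa> = (k2 - k1/2) / k1"
  have comp: "s * c$e = \<kappa> * (y$e - x$e)" for e
  proof -
    have h1: "y$e - x$e = k1 * u$e"
    proof -
      have "(y - x)$e = (k1 *\<^sub>R u)$e" using k1 by simp
      then show ?thesis by simp
    qed
    have h2: "x$e / 2 + y$e / 2 + s * c$e - x$e = k2 * u$e"
    proof -
      have "((q + s *\<^sub>R c) - x)$e = (k2 *\<^sub>R u)$e" using k2 by simp
      then show ?thesis by (simp add: qc)
    qed
    have "s * c$e = k2 * u$e - k1 * u$e / 2" using h1 h2 by linarith
    also have "\<dots> = \<kappa> * (k1 * u$e)" using k1n by (simp add: \<kappa>_def field_simps)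
    also have "\<dots> = \<kappa> * (y$e - x$e)" using h1 by simp
    finally show ?thesis .
  qed
  have \<kappa>n: "\<kappa> \<noteq> 0"
  proof
    assume "\<kappa> = 0"
    then have "s * c$e = 0" for e using comp by simp
    then have "c$e = 0" for e using s(1) by simp
    then show False using c(3) by (simp add: vec_eq_iff)
  qed
  have Zsub: "nz (y - x) \<subseteq> nz c"
  proof
    fix e assume "e \<in> nz (y - x)"
    then have "y$e - x$e \<noteq> 0" by (simp add: nz_def)
    then have "s * c$e \<noteq> 0" using comp[of e] \<kappa>n by simp
    then show "e \<in> nz c" by (simp add: nz_def)
  qed
  have Zsub1: "nz (y - x) \<subseteq> insert \<epsilon> T" using Zsub c(2) by blast
  have T'sub: "T' \<subseteq> insert \<epsilon> T"
  proof
    fix e assume eT': "e \<in> T'"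
    show "e \<in> insert \<epsilon> T"
    proof (rule ccontr)
      assume ne: "e \<notin> insert \<epsilon> T"
      then have "x$e = 0" using x0[of e] by (auto simp: T_def supp_def)
      moreover have "y$e > 0" using eT' by (simp add: T'_def supp_def)
      ultimately have "e \<in> nz (y - x)" by (simp add: nz_def)
      then show False using Zsub1 ne by blast
    qed
  qed
  define K where "K = insert \<epsilon> T - T'"
  have "card K = card (insert \<epsilon> T) - card T'"
    unfolding K_def by (rule card_Diff_subset) (simp_all add: T'sub)
  also have "\<dots> = 1" using eps cT cT' by simp
  finally obtain \<epsilon>' where K: "K = {\<epsilon>'}" by (meson card_1_singletonE)
  have e'T: "\<epsilon>' \<in> T" "\<epsilon>' \<noteq> \<epsilon>" "\<epsilon>' \<notin> T'" using K eps unfolding K_def by auto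
  have T'eq: "T' = insert \<epsilon> (T - {\<epsilon>'})"
  proof
    show "T' \<subseteq> insert \<epsilon> (T - {\<epsilon>'})" using T'sub e'T(3) by blast
    show "insert \<epsilon> (T - {\<epsilon>'}) \<subseteq> T'"
    proof
      fix e assume "e \<in> insert \<epsilon> (T - {\<epsilon>'})"
      then consider "e = \<epsilon>" | "e \<in> T" "e \<noteq> \<epsilon>'" by blast
      then show "e \<in> T'"
      proof cases
        case 1 then show ?thesis using eps by simp
      next
        case 2
        show ?thesis
        proof (rule ccontr)
          assume "e \<notin> T'"
          then have "e \<in> K" using 2 by (simp add: K_def)
          then show False using K 2 by simp
        qed
      qed
    qed
  qed
  have fsteq: "fst \<epsilon>' = fst \<epsilon>"
  proof (rule ccontr)
    assume ne: "fst \<epsilon>' \<noteq> fst \<epsilon>"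
    obtain a b where ab: "\<epsilon> = (a, b)" by (cases \<epsilon>)
    have "{\<nu>. (a,\<nu>) \<in> T'} = insert b {\<nu>. (a,\<nu>) \<in> T}" using T'eq ne ab by auto
    moreover have "b \<notin> {\<nu>. (a,\<nu>) \<in> T}" using eps(2) ab by simp
    ultimately have "source_degree T' a = source_degree T a + 1"
      by (simp add: source_degree_def)
    then show False using degT degT' by simp
  qed
  have Z0: "nz (y - x) \<noteq> {}"
  proof -
    obtain e where "x$e \<noteq> y$e" using xy by (meson vec_eq_iff)
    then have "e \<in> nz (y - x)" by (simp add: nz_def)
    then show ?thesis by blast
  qed
  have LZ: "Lmap (y - x) = 0" using xL yL by (simp add: Lmap_diff)
  obtain vs where cyc: "is_cycle (nz (y - x)) vs"
    using core_cycle[OF Z0] deg_nz_ne1[OF LZ] by blast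
  have Zsub2: "nz (y - x) \<subseteq> insert \<epsilon>' T'"
  proof
    fix e assume "e \<in> nz (y - x)"
    then have "y$e \<noteq> x$e" by (simp add: nz_def)
    then have "x$e > 0 \<or> y$e > 0" using x0[of e] y0[of e] by linarith
    then have "e \<in> T \<or> e \<in> T'" by (auto simp: T_def T'_def supp_def)
    then show "e \<in> insert \<epsilon>' T'" using T'eq by blast
  qed
  let ?Ce = "cycle_edges (nz (y - x)) vs"
  have cycCe: "is_cycle ?Ce vs" by (rule is_cycle_edges[OF cyc])
  have CeZ: "?Ce \<subseteq> nz (y - x)" by (rule cycle_edges_sub)
  have epsCe: "\<epsilon> \<in> ?Ce"
  proof (rule ccontr)
    assume "\<epsilon> \<notin> ?Ce"
    then have "?Ce \<subseteq> T" using CeZ Zsub1 by blast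
    then have "is_cycle T vs" by (rule is_cycle_mono[OF cycCe])
    then show False using acT by (auto simp: acyclic_graph_def)
  qed
  have eps'Ce: "\<epsilon>' \<in> ?Ce"
  proof (rule ccontr)
    assume "\<epsilon>' \<notin> ?Ce"
    then have "?Ce \<subseteq> T'" using CeZ Zsub2 by blast
    then have "is_cycle T' vs" by (rule is_cycle_mono[OF cycCe])
    then show False using acT' by (auto simp: acyclic_graph_def)
  qed
  have "is_cycle (insert \<epsilon> T) vs" by (rule is_cycle_mono[OF cyc Zsub1])
  moreover have "\<epsilon> \<in> cycle_edges (insert \<epsilon> T) vs" using cycle_edges_mono[OF epsCe] by simp
  moreover have "\<epsilon>' \<in> cycle_edges (insert \<epsilon> T) vs" using cycle_edges_mono[OF eps'Ce] e'T by simp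
  ultimately have "pivot T T'" unfolding pivot_def using eps(2) e'T(2) fsteq T'eq
    by (intro exI[of _ \<epsilon>] exI[of _ \<epsilon>'] exI[of _ vs]) simp
  then show ?thesis by (simp add: T_def T'_def)
qed

lemma skel_sym: "skeleton_adj P x y \<Longrightarrow> skeleton_adj P y x"
  unfolding skeleton_adj_def by blast

lemma adj_iff:
  fixes d :: "'m::finite \<Rightarrow> nat"
  assumes card: "CARD('n::finite) = 1 + (\<Sum>\<mu>\<in>UNIV. d \<mu>)"
    and xv: "x \<in> vertices (P_d d :: (real ^ ('m \<times> 'n)) set)" and yv: "y \<in> vertices (P_d d :: (real ^ ('m \<times> 'n)) set)"
  shows "skeleton_adj (P_d d) x y \<longleftrightarrow> pivot_adj d (supp x) (supp y)"
proof
  assume "skeleton_adj (P_d d) x y"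
  then have p: "pivot (supp x) (supp y)" by (rule adj_pivot[OF card])
  have "supp x \<in> trees_d d" by (rule vertex_tree[OF card xv])
  moreover have "supp y \<in> trees_d d" by (rule vertex_tree[OF card yv])
  ultimately show "pivot_adj d (supp x) (supp y)" unfolding pivot_adj_def using p by simp
next
  assume "pivot_adj d (supp x) (supp y)"
  then have "pivot (supp x) (supp y) \<or> pivot (supp y) (supp x)" unfolding pivot_adj_def by simp
  then show "skeleton_adj (P_d d) x y"
  proof
    assume "pivot (supp x) (supp y)"
    then have "\<exists>e e'. e \<notin> supp x \<and> e' \<in> supp x \<and> e' \<noteq> e \<and> supp y = insert e (supp x - {e'})"
      by (rule pivot_facts)
    then obtain e e' where h: "e \<notin> supp x \<and> e' \<in> supp x \<and> e' \<noteq> e \<and> supp y = insert e (supp x - {e'})"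
      by iprover
    show ?thesis by (rule exch_adj[OF xv yv]) (use h in simp_all)
  next
    assume "pivot (supp y) (supp x)"
    then have "\<exists>e e'. e \<notin> supp y \<and> e' \<in> supp y \<and> e' \<noteq> e \<and> supp x = insert e (supp y - {e'})"
      by (rule pivot_facts)
    then obtain e e' where h: "e \<notin> supp y \<and> e' \<in> supp y \<and> e' \<noteq> e \<and> supp x = insert e (supp y - {e'})"
      by iprover
    have "skeleton_adj (P_d d) y x" by (rule exch_adj[OF yv xv]) (use h in simp_all)
    then show ?thesis by (rule skel_sym)
  qed
qed

theorem lemma4p2:
  fixes d :: "'m::finite \<Rightarrow> nat"
  assumes "CARD('n::finite) = 1 + (\<Sum>\<mu>\<in>UNIV. d \<mu>)"
  shows "bij_betw supp (vertices (P_d d :: (real ^ ('m \<times> 'n)) set)) (trees_d d)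
    \<and> (\<forall>x \<in> vertices (P_d d :: (real ^ ('m \<times> 'n)) set). \<forall>y \<in> vertices (P_d d).
         skeleton_adj (P_d d) x y \<longleftrightarrow> pivot_adj d (supp x) (supp y))"
proof
  show "bij_betw supp (vertices (P_d d :: (real ^ ('m \<times> 'n)) set)) (trees_d d)"
    unfolding bij_betw_def
  proof
    show "inj_on supp (vertices (P_d d :: (real ^ ('m \<times> 'n)) set))"
    proof (rule inj_onI)
      fix x y :: "real ^ ('m \<times> 'n)"
      assume "x \<in> vertices (P_d d)" "y \<in> vertices (P_d d)" "supp x = supp y"
      then show "x = y" by (rule vertex_inj)
    qed
    show "supp ` vertices (P_d d :: (real ^ ('m \<times> 'n)) set) = trees_d d"
    proof
      show "supp ` vertices (P_d d :: (real ^ ('m \<times> 'n)) set) \<subseteq> trees_d d"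
      proof
        fix T assume "T \<in> supp ` vertices (P_d d :: (real ^ ('m \<times> 'n)) set)"
        then obtain x where x: "x \<in> vertices (P_d d :: (real ^ ('m \<times> 'n)) set)" "T = supp x" by blast
        then show "T \<in> trees_d d" using vertex_tree[OF assms x(1)] by simp
      qed
      show "trees_d d \<subseteq> supp ` vertices (P_d d :: (real ^ ('m \<times> 'n)) set)"
      proof
        fix T assume T: "T \<in> (trees_d d :: ('m \<times> 'n) set set)"
        obtain x where x: "x \<in> vertices (P_d d :: (real ^ ('m \<times> 'n)) set)" "supp x = T"
          using tree_vertex[OF assms T] by blast
        show "T \<in> supp ` vertices (P_d d :: (real ^ ('m \<times> 'n)) set)"
          using x by (intro image_eqI[of _ _ x]) simp_all
      qed
    qed
  qed
  show "\<forall>x \<in> vertices (P_d d :: (real ^ ('m \<times> 'n)) set). \<forall>y \<in> vertices (P_d d).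
         skeleton_adj (P_d d) x y \<longleftrightarrow> pivot_adj d (supp x) (supp y)"
    by (intro ballI) (rule adj_iff[OF assms])
qed



end
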